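(* Let $(\mathfrak g,[-,-]_{\mathfrak g})$ be a Lie algebra, $(\rho,V)$ a representation of it, and $T:V\to\mathfrak g$ an anti-$\mathcal O$-operator of $(\mathfrak g,[-,-]_{\mathfrak g})$ associated to $(\rho,V)$. Define $\circ:V\otimes V\to V$ by $u\circ v=-\rho(T(u))v$. Then $(V,\circ)$ satisfies $u\circ(v\circ w)-v\circ(u\circ w)=[v,u]\circ w$ for all $u,v,w\in V$, where $[u,v]=u\circ v-v\circ u$. Moreover, $(V,\circ)$ is an anti-pre-Lie algebra (in particular Lie-admissible) if and only if $T$ is strong. In this case, $T$ is a homomorphism of Lie algebras from $(V,[-,-])$ to $(\mathfrak g,[-,-]_{\mathfrak g})$; furthermore, $T(u)\circ_{\mathfrak g}T(v)=T(u\circ v)$ ($u,v\in V$) defines an anti-pre-Lie algebra structure on $T(V)\subset\mathfrak g$, and $T$ is a homomorphism of anti-pre-Lie algebras from $(V,\circ)$ to $(T(V),\circ_{\mathfrak g})$.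
   Context: All vector spaces are finite-dimensional over a field $\mathbb F$ of characteristic $0$. An anti-pre-Lie algebra is a vector space $A$ with a bilinear operation $\circ$ such that, writing $[x,y]=x\circ y-y\circ x$, for all $x,y,z\in A$: (i) $x\circ(y\circ z)-y\circ(x\circ z)=[y,x]\circ z$, and (ii) $[x,y]\circ z+[y,z]\circ x+[z,x]\circ y=0$. A linear map $T:V\to\mathfrak g$ is an anti-$\mathcal O$-operator associated to a representation $(\rho,V)$ if $[T(u),T(v)]_{\mathfrak g}=T(\rho(T(v))u-\rho(T(u))v)$ for all $u,v\in V$; it is strong if moreover $\rho([T(u),T(v)]_{\mathfrak g})w+\rho([T(v),T(w)]_{\mathfrak g})u+\rho([T(w),T(u)]_{\mathfrak g})v=0$ for all $u,v,w\in V$. *)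

theory Defs
  imports Complex_Main
begin

definition fin_dim_vs :: "('k::field \<Rightarrow> 'v::ab_group_add \<Rightarrow> 'v) \<Rightarrow> bool" where
  "fin_dim_vs sc \<longleftrightarrow> vector_space sc \<and> (\<exists>B. finite B \<and> (\<forall>v. \<exists>c. v = (\<Sum>b\<in>B. sc (c b) b)))"

definition bilinear_on :: "('k::field \<Rightarrow> 'v::ab_group_add \<Rightarrow> 'v) \<Rightarrow> 'v set \<Rightarrow> ('v \<Rightarrow> 'v \<Rightarrow> 'v) \<Rightarrow> bool" where
  "bilinear_on sc S m \<longleftrightarrow>
     (\<forall>x\<in>S. \<forall>y\<in>S. \<forall>z\<in>S. m (x + y) z = m x z + m y z \<and> m z (x + y) = m z x + m z y) \<and>
     (\<forall>a. \<forall>x\<in>S. \<forall>y\<in>S. m (sc a x) y = sc a (m x y) \<and> m x (sc a y) = sc a (m x y))"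

definition lie_algebra :: "('k::field \<Rightarrow> 'g::ab_group_add \<Rightarrow> 'g) \<Rightarrow> ('g \<Rightarrow> 'g \<Rightarrow> 'g) \<Rightarrow> bool" where
  "lie_algebra sc br \<longleftrightarrow> vector_space sc \<and> bilinear_on sc UNIV br \<and>
     (\<forall>x. br x x = 0) \<and>
     (\<forall>x y z. br x (br y z) + br y (br z x) + br z (br x y) = 0)"

definition representation ::
  "('k::field \<Rightarrow> 'g::ab_group_add \<Rightarrow> 'g) \<Rightarrow> ('g \<Rightarrow> 'g \<Rightarrow> 'g) \<Rightarrow>
   ('k \<Rightarrow> 'v::ab_group_add \<Rightarrow> 'v) \<Rightarrow> ('g \<Rightarrow> 'v \<Rightarrow> 'v) \<Rightarrow> bool" where
  "representation scg br scv \<rho> \<longleftrightarrow> vector_space scv \<and>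
     (\<forall>x y v. \<rho> (x + y) v = \<rho> x v + \<rho> y v) \<and>
     (\<forall>a x v. \<rho> (scg a x) v = scv a (\<rho> x v)) \<and>
     (\<forall>x. Vector_Spaces.linear scv scv (\<rho> x)) \<and>
     (\<forall>x y v. \<rho> (br x y) v = \<rho> x (\<rho> y v) - \<rho> y (\<rho> x v))"

definition commutator :: "('v::ab_group_add \<Rightarrow> 'v \<Rightarrow> 'v) \<Rightarrow> 'v \<Rightarrow> 'v \<Rightarrow> 'v" where
  "commutator m x y = m x y - m y x"

definition anti_pre_Lie_on :: "('k::field \<Rightarrow> 'v::ab_group_add \<Rightarrow> 'v) \<Rightarrow> 'v set \<Rightarrow> ('v \<Rightarrow> 'v \<Rightarrow> 'v) \<Rightarrow> bool" where
  "anti_pre_Lie_on sc S m \<longleftrightarrow> vector_space sc \<and> (0 \<in> S \<and> (\<forall>x\<in>S. \<forall>y\<in>S. x + y \<in> S) \<and> (\<forall>a. \<forall>x\<in>S. sc a x \<in> S)) \<and>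
     (\<forall>x\<in>S. \<forall>y\<in>S. m x y \<in> S) \<and> bilinear_on sc S m \<and>
     (\<forall>x\<in>S. \<forall>y\<in>S. \<forall>z\<in>S. m x (m y z) - m y (m x z) = m (commutator m y x) z) \<and>
     (\<forall>x\<in>S. \<forall>y\<in>S. \<forall>z\<in>S.
        m (commutator m x y) z + m (commutator m y z) x + m (commutator m z x) y = 0)"

abbreviation anti_pre_Lie where "anti_pre_Lie sc m \<equiv> anti_pre_Lie_on sc UNIV m"

definition anti_O_operator ::
  "('k::field \<Rightarrow> 'g::ab_group_add \<Rightarrow> 'g) \<Rightarrow> ('g \<Rightarrow> 'g \<Rightarrow> 'g) \<Rightarrow>
   ('k \<Rightarrow> 'v::ab_group_add \<Rightarrow> 'v) \<Rightarrow> ('g \<Rightarrow> 'v \<Rightarrow> 'v) \<Rightarrow> ('v \<Rightarrow> 'g) \<Rightarrow> bool" where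
  "anti_O_operator scg br scv \<rho> T \<longleftrightarrow> Vector_Spaces.linear scv scg T \<and>
     (\<forall>u v. br (T u) (T v) = T (\<rho> (T v) u - \<rho> (T u) v))"

definition strong_anti_O_operator ::
  "('k::field \<Rightarrow> 'g::ab_group_add \<Rightarrow> 'g) \<Rightarrow> ('g \<Rightarrow> 'g \<Rightarrow> 'g) \<Rightarrow>
   ('k \<Rightarrow> 'v::ab_group_add \<Rightarrow> 'v) \<Rightarrow> ('g \<Rightarrow> 'v \<Rightarrow> 'v) \<Rightarrow> ('v \<Rightarrow> 'g) \<Rightarrow> bool" where
  "strong_anti_O_operator scg br scv \<rho> T \<longleftrightarrow> anti_O_operator scg br scv \<rho> T \<and>
     (\<forall>u v w. \<rho> (br (T u) (T v)) w + \<rho> (br (T v) (T w)) u + \<rho> (br (T w) (T u)) v = 0)"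

definition lie_hom ::
  "('k::field \<Rightarrow> 'v::ab_group_add \<Rightarrow> 'v) \<Rightarrow> ('v \<Rightarrow> 'v \<Rightarrow> 'v) \<Rightarrow>
   ('k \<Rightarrow> 'g::ab_group_add \<Rightarrow> 'g) \<Rightarrow> ('g \<Rightarrow> 'g \<Rightarrow> 'g) \<Rightarrow> ('v \<Rightarrow> 'g) \<Rightarrow> bool" where
  "lie_hom scv brv scg brg T \<longleftrightarrow> Vector_Spaces.linear scv scg T \<and>
     (\<forall>u v. T (brv u v) = brg (T u) (T v))"

end

theory Submission
  imports Defs
begin

theorem proposition2p14:
  fixes scg :: "'k::field_char_0 \<Rightarrow> 'g::ab_group_add \<Rightarrow> 'g"
    and br :: "'g \<Rightarrow> 'g \<Rightarrow> 'g"
    and scv :: "'k \<Rightarrow> 'v::ab_group_add \<Rightarrow> 'v"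
    and \<rho> :: "'g \<Rightarrow> 'v \<Rightarrow> 'v"
    and T :: "'v \<Rightarrow> 'g"
    and circ :: "'v \<Rightarrow> 'v \<Rightarrow> 'v"
  assumes "fin_dim_vs scg" and "fin_dim_vs scv"
    and "lie_algebra scg br"
    and "representation scg br scv \<rho>"
    and "anti_O_operator scg br scv \<rho> T"
    and circ_def: "\<And>u v. circ u v = - \<rho> (T u) v"
  shows "(\<forall>u v w. circ u (circ v w) - circ v (circ u w) = circ (commutator circ v u) w)
    \<and> (anti_pre_Lie scv circ \<longleftrightarrow> strong_anti_O_operator scg br scv \<rho> T)
    \<and> (strong_anti_O_operator scg br scv \<rho> T \<longrightarrow>
         lie_algebra scv (commutator circ)
       \<and> lie_hom scv (commutator circ) scg br T
       \<and> (\<exists>circg :: 'g \<Rightarrow> 'g \<Rightarrow> 'g.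
            (\<forall>u v. circg (T u) (T v) = T (circ u v))
          \<and> anti_pre_Lie_on scg (range T) circg))"
proof -
  from assms(3) have vsg: "vector_space scg" and brbil: "bilinear_on scg UNIV br"
    by (auto simp: lie_algebra_def)
  from assms(4) have vsv: "vector_space scv"
    and radd: "\<And>x y v. \<rho> (x + y) v = \<rho> x v + \<rho> y v"
    and rsc: "\<And>a x v. \<rho> (scg a x) v = scv a (\<rho> x v)"
    and rlin: "\<And>x. Vector_Spaces.linear scv scv (\<rho> x)"
    and rbr: "\<And>x y v. \<rho> (br x y) v = \<rho> x (\<rho> y v) - \<rho> y (\<rho> x v)"
    by (auto simp: representation_def)
  from assms(5) have Tlin: "Vector_Spaces.linear scv scg T"
    and aO: "\<And>u v. br (T u) (T v) = T (\<rho> (T v) u - \<rho> (T u) v)"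
    by (auto simp: anti_O_operator_def)
  have Th: "module_hom scv scg T" using Tlin by (simp add: module_hom_iff_linear)
  have Tadd: "\<And>x y. T (x + y) = T x + T y" using module_hom.add[OF Th] .
  have Tsc: "\<And>a x. T (scv a x) = scg a (T x)" using module_hom.scale[OF Th] .
  have T0: "T 0 = 0" using module_hom.zero[OF Th] .
  have Tneg: "\<And>x. T (- x) = - T x" using module_hom.neg[OF Th] .
  have Tdiff: "\<And>x y. T (x - y) = T x - T y" using module_hom.diff[OF Th] .
  have Rh: "\<And>x. module_hom scv scv (\<rho> x)" using rlin by (simp add: module_hom_iff_linear)
  have Radd: "\<And>x v w. \<rho> x (v + w) = \<rho> x v + \<rho> x w" using module_hom.add[OF Rh] .
  have Rsc: "\<And>x a v. \<rho> x (scv a v) = scv a (\<rho> x v)" using module_hom.scale[OF Rh] .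
  have R0: "\<And>x. \<rho> x 0 = 0" using module_hom.zero[OF Rh] .
  have Rneg: "\<And>x v. \<rho> x (- v) = - \<rho> x v" using module_hom.neg[OF Rh] .
  have Rdiff: "\<And>x v w. \<rho> x (v - w) = \<rho> x v - \<rho> x w" using module_hom.diff[OF Rh] .
  have r0: "\<And>v. \<rho> 0 v = 0" using radd[of 0 0] by simp
  have rneg: "\<And>x v. \<rho> (- x) v = - \<rho> x v"
    using radd r0 by (metis add.right_inverse add_eq_0_iff)
  have rdiff: "\<And>x y v. \<rho> (x - y) v = \<rho> x v - \<rho> y v"
    using radd rneg by (metis diff_conv_add_uminus)
  have svneg: "\<And>a v. scv a (- v) = - scv a v" 
    using vsv unfolding module_iff_vector_space[symmetric] by (rule module.scale_minus_right)
  have svdiff: "\<And>a v w. scv a (v - w) = scv a v - scv a w"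
    using vsv unfolding module_iff_vector_space[symmetric] by (rule module.scale_right_diff_distrib)
  have br0: "\<And>x. br x 0 = 0"
  proof -
    fix x have "br x (0 + 0) = br x 0 + br x 0" using brbil unfolding bilinear_on_def by blast
    then show "br x 0 = 0" by simp
  qed
  have comm: "\<And>u v. commutator circ u v = \<rho> (T v) u - \<rho> (T u) v"
    by (simp add: commutator_def circ_def)
  have Tcomm: "\<And>u v. T (commutator circ u v) = br (T u) (T v)"
    by (simp add: comm aO)
  have comm_anti: "\<And>u v. commutator circ v u = - commutator circ u v"
    by (simp add: commutator_def)
  have P1: "\<And>u v w. circ u (circ v w) - circ v (circ u w) = circ (commutator circ v u) w"
    by (simp add: circ_def Tcomm rbr Rneg)
  have P2id: "\<And>x y z. circ (commutator circ x y) z + circ (commutator circ y z) x + circ (commutator circ z x) y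
      = - (\<rho> (br (T x) (T y)) z + \<rho> (br (T y) (T z)) x + \<rho> (br (T z) (T x)) y)"
    by (simp add: circ_def Tcomm)
  have bil: "bilinear_on scv UNIV circ"
    unfolding bilinear_on_def
    by (simp add: circ_def Tadd Tsc radd Radd rsc Rsc svneg)
  have apl_iff: "anti_pre_Lie scv circ \<longleftrightarrow> strong_anti_O_operator scg br scv \<rho> T"
  proof
    assume "anti_pre_Lie scv circ"
    then have "\<And>x y z. circ (commutator circ x y) z + circ (commutator circ y z) x + circ (commutator circ z x) y = 0"
      by (simp add: anti_pre_Lie_on_def)
    then have "\<And>x y z. \<rho> (br (T x) (T y)) z + \<rho> (br (T y) (T z)) x + \<rho> (br (T z) (T x)) y = 0"
      by (metis P2id neg_equal_0_iff_equal)
    then show "strong_anti_O_operator scg br scv \<rho> T"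
      using assms(5) by (simp add: strong_anti_O_operator_def)
  next
    assume "strong_anti_O_operator scg br scv \<rho> T"
    then have "\<And>x y z. \<rho> (br (T x) (T y)) z + \<rho> (br (T y) (T z)) x + \<rho> (br (T z) (T x)) y = 0"
      by (simp add: strong_anti_O_operator_def)
    then show "anti_pre_Lie scv circ"
      unfolding anti_pre_Lie_on_def using vsv bil P1 P2id by simp
  qed
  have P3: "lie_algebra scv (commutator circ) \<and> lie_hom scv (commutator circ) scg br T
       \<and> (\<exists>circg :: 'g \<Rightarrow> 'g \<Rightarrow> 'g.
            (\<forall>u v. circg (T u) (T v) = T (circ u v))
          \<and> anti_pre_Lie_on scg (range T) circg)"
    if st: "strong_anti_O_operator scg br scv \<rho> T"
  proof -
    have S: "\<And>x y z. \<rho> (br (T x) (T y)) z + \<rho> (br (T y) (T z)) x + \<rho> (br (T z) (T x)) y = 0"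
      using st by (simp add: strong_anti_O_operator_def)
    have apl: "anti_pre_Lie scv circ" using st apl_iff by simp
    have L1: "lie_algebra scv (commutator circ)"
      unfolding lie_algebra_def
    proof (intro conjI allI)
      show "vector_space scv" by (rule vsv)
      show "bilinear_on scv UNIV (commutator circ)"
        using bil unfolding bilinear_on_def commutator_def
        by (simp add: vsv svdiff algebra_simps)
      fix x show "commutator circ x x = 0" by (simp add: commutator_def)
    next
      fix x y z
      let ?L = "\<lambda>a. \<rho> (T a)"
      have e: "\<And>a b c. commutator circ a (commutator circ b c)
          = \<rho> (br (T b) (T c)) a - ?L a (?L c b) + ?L a (?L b c)"
        by (simp add: comm aO Rdiff)
      have "commutator circ x (commutator circ y z) + commutator circ y (commutator circ z x) + commutator circ z (commutator circ x y)
          = (\<rho> (br (T y) (T z)) x + \<rho> (br (T z) (T x)) y + \<rho> (br (T x) (T y)) z)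
            + ((?L x (?L y z) - ?L y (?L x z)) + (?L y (?L z x) - ?L z (?L y x)) + (?L z (?L x y) - ?L x (?L z y)))"
        unfolding e by (simp add: algebra_simps)
      also have "\<dots> = (\<rho> (br (T x) (T y)) z + \<rho> (br (T y) (T z)) x + \<rho> (br (T z) (T x)) y)
            + (\<rho> (br (T x) (T y)) z + \<rho> (br (T y) (T z)) x + \<rho> (br (T z) (T x)) y)"
        by (simp add: rbr algebra_simps)
      also have "\<dots> = 0" using S by simp
      finally show "commutator circ x (commutator circ y z) + commutator circ y (commutator circ z x) + commutator circ z (commutator circ x y) = 0" .
    qed
    have L2: "lie_hom scv (commutator circ) scg br T"
      unfolding lie_hom_def using Tlin Tcomm by simp
    define circg where "circg = (\<lambda>a b. T (circ (inv T a) (inv T b)))"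
    have key: "\<And>u v. circg (T u) (T v) = T (circ u v)"
    proof -
      fix u v
      have tu: "T (inv T (T u)) = T u" and tv: "T (inv T (T v)) = T v"
        by (simp_all add: f_inv_into_f)
      have z: "T (\<rho> (T u) w) = 0" if "T w = 0" for w
      proof -
        have "br (T u) (T w) = T (\<rho> (T w) u - \<rho> (T u) w)" by (rule aO)
        then show ?thesis using that by (simp add: br0 r0 Tneg)
      qed
      have "T (\<rho> (T u) (inv T (T v))) - T (\<rho> (T u) v) = T (\<rho> (T u) (inv T (T v) - v))"
        by (simp add: Rdiff Tdiff)
      also have "\<dots> = 0" by (rule z) (simp add: Tdiff tv)
      finally show "circg (T u) (T v) = T (circ u v)"
        by (simp add: circg_def circ_def tu Tneg)
    qed
    have inR: "\<And>a. a \<in> range T \<longleftrightarrow> (\<exists>u. a = T u)" by auto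
    have A3: "anti_pre_Lie_on scg (range T) circg"
      unfolding anti_pre_Lie_on_def
    proof (intro conjI ballI allI)
      show "vector_space scg" by (rule vsg)
      show "0 \<in> range T" using T0 by (metis rangeI)
      fix a assume "a \<in> range T"
      then obtain u where a: "a = T u" by auto
      {
        fix b assume "b \<in> range T"
        then obtain v where b: "b = T v" by auto
        show "a + b \<in> range T" unfolding a b by (metis Tadd rangeI)
        show "circg a b \<in> range T" unfolding a b key by simp
        {
          fix c assume "c \<in> range T"
          then obtain w where c: "c = T w" by auto
          have "circ u (circ v w) - circ v (circ u w) = circ (commutator circ v u) w" by (rule P1)
          then have "T (circ u (circ v w)) - T (circ v (circ u w)) = T (circ (commutator circ v u) w)"
            by (metis Tdiff)
          moreover have "commutator circg b a = T (commutator circ v u)"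
            unfolding a b commutator_def by (simp add: key Tdiff)
          ultimately show "circg a (circg b c) - circg b (circg a c) = circg (commutator circg b a) c"
            unfolding a b c by (simp add: key)
          have "circ (commutator circ u v) w + circ (commutator circ v w) u + circ (commutator circ w u) v = 0"
            using apl by (simp add: anti_pre_Lie_on_def)
          then have "T (circ (commutator circ u v) w) + T (circ (commutator circ v w) u) + T (circ (commutator circ w u) v) = 0"
            by (metis Tadd T0)
          moreover have "\<And>p q. commutator circg (T p) (T q) = T (commutator circ p q)"
            unfolding commutator_def by (simp add: key Tdiff)
          ultimately show "circg (commutator circg a b) c + circg (commutator circg b c) a + circg (commutator circg c a) b = 0"
            unfolding a b c by (simp add: key)
        }
      }
    next
      fix k a assume "a \<in> range T"
      then obtain u where a: "a = T u" by auto
      show "scg k a \<in> range T" unfolding a by (metis Tsc rangeI)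
    next
      have "\<And>x y z. circ (x + y) z = circ x z + circ y z \<and> circ z (x + y) = circ z x + circ z y"
        "\<And>k x y. circ (scv k x) y = scv k (circ x y) \<and> circ x (scv k y) = scv k (circ x y)"
        using bil by (auto simp: bilinear_on_def)
      then show "bilinear_on scg (range T) circg"
        unfolding bilinear_on_def
        by (auto simp: key Tadd[symmetric] Tsc[symmetric] simp del: Tadd Tsc)
    qed
    show ?thesis using L1 L2 A3 key by blast
  qed
  show ?thesis using P1 apl_iff P3 by blast
qed

end
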